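(* Let $a<b$, integers $1\le p\le n$, $P_1=P_1^T\in\mathbb{R}^{n\times n}$ invertible, $P_0=-P_0^T\in\mathbb{R}^{n\times n}$, $\mathcal{X}=L^2([a,b];\mathbb{R}^n)$, $Z$ a real Hilbert space, $H\in\mathcal{L}(Z,\mathcal{X})$, $\delta t>0$ fixed, and $\mathcal{J}e=P_1\frac{de}{d\zeta}+P_0e$ for $e\in H^1([a,b];\mathbb{R}^n)$. Let $\mathcal{D}^A$ be the set of all $(\delta f_\varepsilon,\delta f_w,\delta f_\partial,e_\varepsilon,e_w,e_\partial)\in(\mathcal{X}\times Z\times\mathbb{R}^n)^2$ with $e_\varepsilon\in H^1([a,b];\mathbb{R}^n)$, $\delta f_\varepsilon=\mathcal{J}e_\varepsilon\delta t+H\delta f_w$, $\delta f_\partial=\frac{1}{\sqrt2}P_1(e_\varepsilon(b)-e_\varepsilon(a))\delta t$, $e_\partial=\frac{1}{\sqrt2}(e_\varepsilon(b)+e_\varepsilon(a))$, $e_w=H^*e_\varepsilon$, where the boundary ports are split as $\delta f_\partial=(\delta f_{\partial,n-p},f_p)$, $e_\partial=(e_{\partial,n-p},e_p)$ with $\delta f_{\partial,n-p},e_{\partial,n-p}\in\mathbb{R}^{n-p}$ and $f_p,e_p\in\mathbb{R}^p$. Let $\mathcal{F}_3,\mathcal{E}_3$ be real Hilbert spaces, $j_3:\mathcal{F}_3\to\mathcal{E}_3$ a unitary invertible linear map, and let $\mathcal{D}^B\subset(\mathcal{F}_3\times\mathbb{R}^p)\times(\mathcal{E}_3\times\mathbb{R}^p)$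 be a Dirac structure with respect to the pairing $\langle(f^B,f,e^B,e),(\tilde f^B,\tilde f,\tilde e^B,\tilde e)\rangle=\langle f^B,j_3^{-1}\tilde e^B\rangle+\langle e^B,j_3\tilde f^B\rangle-\langle f,\tilde e\rangle-\langle e,\tilde f\rangle$. Define the composition $\mathcal{D}^A\circ\mathcal{D}^B$ as the set of all $(\delta f^A,f^B,e^A,e^B)$ with $\delta f^A=(\delta f_\varepsilon,\delta f_w,\delta f_{\partial,n-p})$, $e^A=(e_\varepsilon,e_w,e_{\partial,n-p})$, $f^B\in\mathcal{F}_3$, $e^B\in\mathcal{E}_3$, for which there exist $f_p,e_p\in\mathbb{R}^p$ with $(\delta f^A,f_p,e^A,e_p)\in\mathcal{D}^A$ and $(f^B,-f_p,e^B,e_p)\in\mathcal{D}^B$, and equip it with the pairing $$\langle\mathfrak{d},\tilde{\mathfrak{d}}\rangle_\dagger=\langle\delta f_\varepsilon,\tilde e_\varepsilon\rangle-\langle\delta f_w,\tilde e_w\rangle-\langle\delta f_{\partial,n-p},\tilde e_{\partial,n-p}\rangle+\langle f^B,j_3^{-1}\tilde e^B\rangle+\langle e_\varepsilon,\delta\tilde f_\varepsilon\rangle-\langle e_w,\delta\tilde f_w\rangle-\langle e_{\partial,n-p},\delta\tilde f_{\partial,n-p}\rangle+\langle e^B,j_3\tilde f^B\rangle.$$ Then $\langle\mathfrak{d},\mathfrak{d}\rangle_\dagger=0$ for every $\mathfrak{d}\in\mathcal{D}^A\circ\mathcal{D}^B$.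
   Context: Inner products on $\mathcal{X}$ are the standard $L^2$ ones and $H^*$ is the $L^2$-adjoint of $H$. A Dirac structure with respect to a symmetric bilinear pairing on a bond space is a linear subspace equal to its orthogonal complement with respect to that pairing. $\mathcal{D}^A$ is the stochastic port-Hamiltonian Dirac structure, split into the part $\mathcal{X}\times Z\times\mathbb{R}^{n-p}$ (with $j_1=\mathrm{diag}(I_\mathcal{X},-I_Z,-I_{\mathbb{R}^{n-p}})$) and the interconnection part $\mathbb{R}^p$ (with $j_2=-I_{\mathbb{R}^p}$); the interconnection of $\mathcal{D}^A$ and $\mathcal{D}^B$ is through the $p$ boundary ports $f_p,e_p$. *)

theory Defs
  imports "HOL-Analysis.Analysis" "Jordan_Normal_Form.Matrix"
begin

text \<open>Vectors of R^k are JNF vectors in carrier_vec k; elements of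
  X = L^2([a,b];R^n) are represented by functions real => real vec.\<close>

definition sq_int_on :: "real \<Rightarrow> real \<Rightarrow> (real \<Rightarrow> real) \<Rightarrow> bool" where
  "sq_int_on a b f \<longleftrightarrow> set_borel_measurable lborel {a..b} f
      \<and> set_integrable lborel {a..b} (\<lambda>x. (f x)^2)"

definition L2vec :: "real \<Rightarrow> real \<Rightarrow> nat \<Rightarrow> (real \<Rightarrow> real vec) \<Rightarrow> bool" where
  "L2vec a b n f \<longleftrightarrow> (\<forall>x\<in>{a..b}. f x \<in> carrier_vec n)
      \<and> (\<forall>i<n. sq_int_on a b (\<lambda>x. vec_index (f x) i))"

definition L2inner :: "real \<Rightarrow> real \<Rightarrow> (real \<Rightarrow> real vec) \<Rightarrow> (real \<Rightarrow> real vec) \<Rightarrow> real" where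
  "L2inner a b f g = (LINT x:{a..b}|lborel. scalar_prod (f x) (g x))"

definition L2eq :: "real \<Rightarrow> real \<Rightarrow> (real \<Rightarrow> real vec) \<Rightarrow> (real \<Rightarrow> real vec) \<Rightarrow> bool" where
  "L2eq a b f g \<longleftrightarrow> (AE x in lborel. x \<in> {a..b} \<longrightarrow> f x = g x)"

text \<open>e is the (continuous) representative of an H^1([a,b];R^n) function with
  weak derivative de (an element of X):  e(x) = e(a) + int_a^x de.\<close>
definition H1_deriv :: "real \<Rightarrow> real \<Rightarrow> nat \<Rightarrow> (real \<Rightarrow> real vec) \<Rightarrow> (real \<Rightarrow> real vec) \<Rightarrow> bool" where
  "H1_deriv a b n e de \<longleftrightarrow> L2vec a b n de \<and> (\<forall>x\<in>{a..b}. e x \<in> carrier_vec n)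
      \<and> (\<forall>i<n. \<forall>x\<in>{a..b}.
            vec_index (e x) i = vec_index (e a) i + (LINT t:{a..x}|lborel. vec_index (de t) i))"

definition bounded_linear_to_L2 :: "real \<Rightarrow> real \<Rightarrow> nat \<Rightarrow> ('z::real_normed_vector \<Rightarrow> real \<Rightarrow> real vec) \<Rightarrow> bool" where
  "bounded_linear_to_L2 a b n H \<longleftrightarrow> (\<forall>z. L2vec a b n (H z))
     \<and> (\<forall>z w. L2eq a b (H (z + w)) (\<lambda>x. H z x + H w x))
     \<and> (\<forall>c z. L2eq a b (H (c *\<^sub>R z)) (\<lambda>x. smult_vec c (H z x)))
     \<and> (\<exists>K. \<forall>z. sqrt (L2inner a b (H z) (H z)) \<le> K * norm z)"

text \<open>The stochastic port-Hamiltonian Dirac structure D^A, as a set of tuples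
  (df_eps, df_w, df_bd, e_eps, e_w, e_bd).  The condition on e_w says e_w = H^* e_eps.\<close>
definition DA :: "real \<Rightarrow> real \<Rightarrow> nat \<Rightarrow> real mat \<Rightarrow> real mat \<Rightarrow>
    ('z::real_inner \<Rightarrow> real \<Rightarrow> real vec) \<Rightarrow> real \<Rightarrow>
    ((real \<Rightarrow> real vec) \<times> 'z \<times> real vec \<times> (real \<Rightarrow> real vec) \<times> 'z \<times> real vec) set" where
  "DA a b n P1 P0 H dt = {(df, dfw, dfb, e, ew, eb).
     L2vec a b n df \<and> dfb \<in> carrier_vec n \<and> eb \<in> carrier_vec n \<and>
     (\<exists>de. H1_deriv a b n e de \<and>
        L2eq a b df (\<lambda>x. smult_vec dt (mult_mat_vec P1 (de x) + mult_mat_vec P0 (e x)) + H dfw x)) \<and>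
     dfb = smult_vec (dt / sqrt 2) (mult_mat_vec P1 (e b - e a)) \<and>
     eb = smult_vec (1 / sqrt 2) (e b + e a) \<and>
     (\<forall>z. inner z ew = L2inner a b (H z) e)}"

definition pairB :: "('f::real_inner \<Rightarrow> 'e::real_inner) \<Rightarrow>
    (('f \<times> real vec) \<times> ('e \<times> real vec)) \<Rightarrow> (('f \<times> real vec) \<times> ('e \<times> real vec)) \<Rightarrow> real" where
  "pairB j3 d d' = (case d of ((fB, f), (eB, e)) \<Rightarrow> case d' of ((fB', f'), (eB', e')) \<Rightarrow>
      inner fB (Hilbert_Choice.inv j3 eB') + inner eB (j3 fB') - scalar_prod f e' - scalar_prod e f')"

text \<open>Dirac structure: a subset of the bond space equal to its orthogonal complement
  (which is automatically a linear subspace).\<close>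
definition dirac_B :: "nat \<Rightarrow> ('f::real_inner \<Rightarrow> 'e::real_inner) \<Rightarrow>
    (('f \<times> real vec) \<times> ('e \<times> real vec)) set \<Rightarrow> bool" where
  "dirac_B p j3 D \<longleftrightarrow>
     D = {d. d \<in> (UNIV \<times> carrier_vec p) \<times> (UNIV \<times> carrier_vec p) \<and> (\<forall>d'\<in>D. pairB j3 d d' = 0)}"

definition compAB :: "real \<Rightarrow> real \<Rightarrow> nat \<Rightarrow> nat \<Rightarrow> real mat \<Rightarrow> real mat \<Rightarrow>
    ('z::real_inner \<Rightarrow> real \<Rightarrow> real vec) \<Rightarrow> real \<Rightarrow>
    (('f::real_inner \<times> real vec) \<times> ('e::real_inner \<times> real vec)) set \<Rightarrow>
    ((real \<Rightarrow> real vec) \<times> 'z \<times> real vec \<times> (real \<Rightarrow> real vec) \<times> 'z \<times> real vec \<times> 'f \<times> 'e) set" where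
  "compAB a b n p P1 P0 H dt DB = {(df, dfw, df1, e, ew, e1, fB, eB).
     df1 \<in> carrier_vec (n - p) \<and> e1 \<in> carrier_vec (n - p) \<and>
     (\<exists>fp ep. fp \<in> carrier_vec p \<and> ep \<in> carrier_vec p \<and>
        (df, dfw, append_vec df1 fp, e, ew, append_vec e1 ep) \<in> DA a b n P1 P0 H dt \<and>
        ((fB, - fp), (eB, ep)) \<in> DB)}"

definition pair_dagger :: "real \<Rightarrow> real \<Rightarrow> ('f::real_inner \<Rightarrow> 'e::real_inner) \<Rightarrow>
    ((real \<Rightarrow> real vec) \<times> 'z::real_inner \<times> real vec \<times> (real \<Rightarrow> real vec) \<times> 'z \<times> real vec \<times> 'f \<times> 'e) \<Rightarrow>
    ((real \<Rightarrow> real vec) \<times> 'z \<times> real vec \<times> (real \<Rightarrow> real vec) \<times> 'z \<times> real vec \<times> 'f \<times> 'e) \<Rightarrow> real" where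
  "pair_dagger a b j3 d d' = (case d of (df, dfw, df1, e, ew, e1, fB, eB) \<Rightarrow>
     case d' of (df', dfw', df1', e', ew', e1', fB', eB') \<Rightarrow>
       L2inner a b df e' - inner dfw ew' - scalar_prod df1 e1' + inner fB (Hilbert_Choice.inv j3 eB')
     + L2inner a b e df' - inner ew dfw' - scalar_prod e1 df1' + inner eB (j3 fB'))"

end

theory Submission
  imports Defs
begin


lemma prod_integrable:
  fixes f g :: "real \<Rightarrow> real"
  assumes f: "integrable lborel f" and g: "integrable lborel g"
  shows "integrable (lborel \<Otimes>\<^sub>M lborel) (\<lambda>(t,s). f t * g s)"
proof (rule lborel_pair.Fubini_integrable)
  show "(\<lambda>(t,s). f t * g s) \<in> borel_measurable (lborel \<Otimes>\<^sub>M lborel)"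
    using f g by measurable
  show "integrable lborel (\<lambda>x. LINT y|lborel. norm (case (x, y) of (t, s) \<Rightarrow> f t * g s))"
    using f g by (simp add: abs_mult)
  show "AE x in lborel. integrable lborel (\<lambda>y. case (x, y) of (t, s) \<Rightarrow> f t * g s)"
    using g by simp
qed

lemma ibp:
  fixes u v :: "real \<Rightarrow> real"
  assumes u: "set_integrable lborel {a..b} u" and v: "set_integrable lborel {a..b} v"
  shows "(LINT t:{a..b}|lborel. u t * (LINT s:{a..t}|lborel. v s))
       + (LINT t:{a..b}|lborel. v t * (LINT s:{a..t}|lborel. u s))
       = (LINT t:{a..b}|lborel. u t) * (LINT t:{a..b}|lborel. v t)"
proof -
  define f where "f t = indicator {a..b} t * u t" for t
  define g where "g t = indicator {a..b} t * v t" for t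
  have fi: "integrable lborel f" using u unfolding f_def set_integrable_def by simp
  have gi: "integrable lborel g" using v unfolding g_def set_integrable_def by simp
  have Fi: "integrable (lborel \<Otimes>\<^sub>M lborel) (\<lambda>(t,s). f t * g s)"
    by (rule prod_integrable[OF fi gi])
  have F1i: "integrable (lborel \<Otimes>\<^sub>M lborel) (\<lambda>(t,s). if s \<le> t then f t * g s else 0)"
    by (rule Bochner_Integration.integrable_bound[OF Fi]) (use fi gi in measurable, auto)
  have F2i: "integrable (lborel \<Otimes>\<^sub>M lborel) (\<lambda>(t,s). if s \<le> t then 0 else f t * g s)"
    by (rule Bochner_Integration.integrable_bound[OF Fi]) (use fi gi in measurable, auto)
  have sum: "integral\<^sup>L (lborel \<Otimes>\<^sub>M lborel) (\<lambda>(t,s). f t * g s)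
     = integral\<^sup>L (lborel \<Otimes>\<^sub>M lborel) (\<lambda>(t,s). if s \<le> t then f t * g s else 0)
     + integral\<^sup>L (lborel \<Otimes>\<^sub>M lborel) (\<lambda>(t,s). if s \<le> t then 0 else f t * g s)"
    by (subst Bochner_Integration.integral_add[OF F1i F2i, symmetric]) (auto intro!: Bochner_Integration.integral_cong)
  have "integral\<^sup>L (lborel \<Otimes>\<^sub>M lborel) (\<lambda>(t,s). f t * g s) = (LINT t|lborel. LINT s|lborel. f t * g s)"
    using lborel_pair.integral_fst[of "\<lambda>t s. f t * g s"] Fi by simp
  also have "\<dots> = (LINT t|lborel. f t) * (LINT t|lborel. g t)" by simp
  also have "\<dots> = (LINT t:{a..b}|lborel. u t) * (LINT t:{a..b}|lborel. v t)"
    by (simp add: f_def g_def set_lebesgue_integral_def)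
  finally have e0: "integral\<^sup>L (lborel \<Otimes>\<^sub>M lborel) (\<lambda>(t,s). f t * g s) = \<dots>" .
  have "integral\<^sup>L (lborel \<Otimes>\<^sub>M lborel) (\<lambda>(t,s). if s \<le> t then f t * g s else 0)
     = (LINT t|lborel. LINT s|lborel. (if s \<le> t then f t * g s else 0))"
    using lborel_pair.integral_fst[of "\<lambda>t s. if s \<le> t then f t * g s else 0"] F1i by simp
  also have "\<dots> = (LINT t|lborel. indicator {a..b} t * (u t * (LINT s:{a..t}|lborel. v s)))"
  proof (rule Bochner_Integration.integral_cong[OF refl])
    fix t
    have "(\<lambda>s. if s \<le> t then f t * g s else 0) = (\<lambda>s. f t * (if s \<le> t then g s else 0))" by auto
    then have "(LINT s|lborel. (if s \<le> t then f t * g s else 0)) = f t * (LINT s|lborel. (if s \<le> t then g s else 0))"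
      by simp
    also have "\<dots> = indicator {a..b} t * (u t * (LINT s:{a..t}|lborel. v s))"
    proof (cases "t \<in> {a..b}")
      case True
      have "(LINT s|lborel. (if s \<le> t then g s else 0)) = (LINT s:{a..t}|lborel. v s)"
        unfolding set_lebesgue_integral_def g_def using True
        by (auto intro!: Bochner_Integration.integral_cong simp: indicator_def)
      then show ?thesis using True by (simp add: f_def)
    qed (simp add: f_def)
    finally show "(LINT s|lborel. (if s \<le> t then f t * g s else 0)) = indicator {a..b} t * (u t * (LINT s:{a..t}|lborel. v s))" .
  qed
  also have "\<dots> = (LINT t:{a..b}|lborel. u t * (LINT s:{a..t}|lborel. v s))"
    by (simp add: set_lebesgue_integral_def)
  finally have e1: "integral\<^sup>L (lborel \<Otimes>\<^sub>M lborel) (\<lambda>(t,s). if s \<le> t then f t * g s else 0) = \<dots>" .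
  have "integral\<^sup>L (lborel \<Otimes>\<^sub>M lborel) (\<lambda>(t,s). if s \<le> t then 0 else f t * g s)
     = (LINT s|lborel. LINT t|lborel. (if s \<le> t then 0 else f t * g s))"
    using lborel_pair.integral_snd[of "\<lambda>t s. if s \<le> t then 0 else f t * g s"] F2i by simp
  also have "\<dots> = (LINT s|lborel. indicator {a..b} s * (v s * (LINT t:{a..s}|lborel. u t)))"
  proof (rule Bochner_Integration.integral_cong[OF refl])
    fix s
    have "(\<lambda>t. if s \<le> t then 0 else f t * g s) = (\<lambda>t. g s * (if s \<le> t then 0 else f t))" by auto
    then have "(LINT t|lborel. (if s \<le> t then 0 else f t * g s)) = g s * (LINT t|lborel. (if s \<le> t then 0 else f t))"
      by simp
    also have "\<dots> = indicator {a..b} s * (v s * (LINT t:{a..s}|lborel. u t))"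
    proof (cases "s \<in> {a..b}")
      case True
      have ui: "set_integrable lborel {a..s} u"
        by (rule set_integrable_subset[OF u]) (use True in auto)
      have "(LINT t|lborel. (if s \<le> t then 0 else f t)) = (LINT t|lborel. indicator {a..s} t * u t)"
      proof (rule integral_cong_AE)
        show "(\<lambda>t. if s \<le> t then 0 else f t) \<in> borel_measurable lborel" using fi by measurable
        show "(\<lambda>t. indicator {a..s} t * u t) \<in> borel_measurable lborel"
          using ui unfolding set_integrable_def by auto
        show "AE t in lborel. (if s \<le> t then 0 else f t) = indicator {a..s} t * u t"
          by (rule AE_mp[OF AE_lborel_singleton[of s]], rule AE_I2) (use True in \<open>auto simp: f_def indicator_def\<close>)
      qed
      then show ?thesis using True by (simp add: g_def set_lebesgue_integral_def)
    qed (simp add: g_def)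
    finally show "(LINT t|lborel. (if s \<le> t then 0 else f t * g s)) = indicator {a..b} s * (v s * (LINT t:{a..s}|lborel. u t))" .
  qed
  also have "\<dots> = (LINT t:{a..b}|lborel. v t * (LINT s:{a..t}|lborel. u s))"
    by (simp add: set_lebesgue_integral_def)
  finally have e2: "integral\<^sup>L (lborel \<Otimes>\<^sub>M lborel) (\<lambda>(t,s). if s \<le> t then 0 else f t * g s) = \<dots>" .
  show ?thesis using sum e0 e1 e2 by simp
qed



lemma abs_le_sq: fixes y :: real shows "\<bar>y\<bar> \<le> 1 + y^2"
proof -
  have "0 \<le> (\<bar>y\<bar> - 1)^2" by simp
  moreover have "(\<bar>y\<bar> - 1)^2 = y^2 - 2 * \<bar>y\<bar> + 1"
    by (simp add: power2_eq_square algebra_simps abs_mult_self_eq)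
  moreover have "0 \<le> y^2" by simp
  ultimately show ?thesis by linarith
qed

lemma sq_int_L1:
  fixes f :: "real \<Rightarrow> real"
  assumes "sq_int_on a b f"
  shows "set_integrable lborel {a..b} f"
proof -
  have m: "(\<lambda>x. indicator {a..b} x *\<^sub>R f x) \<in> borel_measurable lborel"
    using assms unfolding sq_int_on_def set_borel_measurable_def by auto
  have i1: "set_integrable lborel {a..b} (\<lambda>x. 1::real)"
    by (rule borel_integrable_atLeastAtMost') (rule continuous_on_const)
  have i2: "set_integrable lborel {a..b} (\<lambda>x. (f x)^2)"
    using assms unfolding sq_int_on_def by auto
  have i3: "integrable lborel (\<lambda>x. indicator {a..b} x *\<^sub>R (1::real) + indicator {a..b} x *\<^sub>R (f x)^2)"
    using i1 i2 unfolding set_integrable_def by (rule Bochner_Integration.integrable_add)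
  show ?thesis unfolding set_integrable_def
  proof (rule Bochner_Integration.integrable_bound[OF i3 m], rule AE_I2)
    fix x
    have "\<bar>f x\<bar> \<le> 1 + (f x)^2" by (rule abs_le_sq)
    then show "norm (indicator {a..b} x *\<^sub>R f x) \<le> norm (indicator {a..b} x *\<^sub>R (1::real) + indicator {a..b} x *\<^sub>R (f x)^2)"
      by (auto simp: indicator_def)
  qed
qed

lemma integrable_times_cont:
  fixes f g :: "real \<Rightarrow> real"
  assumes f: "set_integrable lborel {a..b} f" and g: "continuous_on {a..b} g"
  shows "set_integrable lborel {a..b} (\<lambda>x. f x * g x)"
proof -
  obtain B where B: "\<forall>x\<in>{a..b}. norm (g x) \<le> B"
    using compact_imp_bounded[OF compact_continuous_image[OF g compact_Icc]]
    unfolding bounded_iff by auto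
  have mf: "(\<lambda>x. indicator {a..b} x *\<^sub>R f x) \<in> borel_measurable lborel"
    using f unfolding set_integrable_def by auto
  have mg: "(\<lambda>x. indicator {a..b} x *\<^sub>R g x) \<in> borel_measurable lborel"
    using borel_measurable_continuous_on_indicator[OF _ g] by simp
  have m: "(\<lambda>x. indicator {a..b} x *\<^sub>R (f x * g x)) \<in> borel_measurable lborel"
  proof -
    have "(\<lambda>x. indicator {a..b} x *\<^sub>R (f x * g x)) = (\<lambda>x. (indicator {a..b} x *\<^sub>R f x) * (indicator {a..b} x *\<^sub>R g x))"
      by (auto simp: indicator_def)
    then show ?thesis using mf mg by simp
  qed
  have i: "integrable lborel (\<lambda>x. B * (indicator {a..b} x *\<^sub>R f x))"
    using f unfolding set_integrable_def by (rule integrable_mult_right)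
  show ?thesis unfolding set_integrable_def
  proof (rule Bochner_Integration.integrable_bound[OF i m], rule AE_I2)
    fix x
    show "norm (indicator {a..b} x *\<^sub>R (f x * g x)) \<le> norm (B * (indicator {a..b} x *\<^sub>R f x))"
    proof (cases "x \<in> {a..b}")
      case True
      then have "\<bar>g x\<bar> \<le> B" using B by auto
      then have "\<bar>f x\<bar> * \<bar>g x\<bar> \<le> \<bar>B\<bar> * \<bar>f x\<bar>"
        by (metis abs_ge_self abs_ge_zero mult.commute mult_left_mono order_trans)
      then show ?thesis using True by (simp add: abs_mult)
    qed simp
  qed
qed

lemma indef_cont:
  fixes u e :: "real \<Rightarrow> real"
  assumes u: "set_integrable lborel {a..b} u"
    and e: "\<forall>x\<in>{a..b}. e x = c + (LINT t:{a..x}|lborel. u t)"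
  shows "continuous_on {a..b} e"
proof -
  have ui: "u integrable_on {a..b}" using set_borel_integral_eq_integral(1)[OF u] .
  have "continuous_on {a..b} (\<lambda>x. c + integral {a..x} u)"
    by (intro continuous_intros indefinite_integral_continuous_1 ui)
  moreover have "\<forall>x\<in>{a..b}. e x = c + integral {a..x} u"
  proof
    fix x assume x: "x \<in> {a..b}"
    have "set_integrable lborel {a..x} u"
      by (rule set_integrable_subset[OF u]) (use x in auto)
    then show "e x = c + integral {a..x} u" using e x set_borel_integral_eq_integral(2) by auto
  qed
  ultimately show ?thesis using continuous_on_cong by (metis (no_types, lifting))
qed



lemma skew_zero:
  fixes Q :: "nat \<Rightarrow> nat \<Rightarrow> real"
  assumes "\<forall>i<n. \<forall>j<n. Q i j = - Q j i"
  shows "(\<Sum>i\<in>{0..<n}. (\<Sum>j\<in>{0..<n}. Q i j * x j) * x i) = 0"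
proof -
  let ?S = "(\<Sum>i\<in>{0..<n}. \<Sum>j\<in>{0..<n}. Q i j * x j * x i)"
  have s: "(\<Sum>i\<in>{0..<n}. (\<Sum>j\<in>{0..<n}. Q i j * x j) * x i) = ?S"
    by (simp add: sum_distrib_right)
  have "?S = (\<Sum>j\<in>{0..<n}. \<Sum>i\<in>{0..<n}. Q i j * x j * x i)"
    by (rule sum.swap)
  also have "\<dots> = (\<Sum>j\<in>{0..<n}. \<Sum>i\<in>{0..<n}. - (Q j i * x i * x j))"
  proof -
    have key: "Q i j * x j * x i = - (Q j i * x i * x j)" if "i < n" "j < n" for i j
    proof -
      have "Q i j = - Q j i" using assms that by blast
      then show ?thesis by (simp add: mult_ac)
    qed
    show ?thesis by (intro sum.cong refl key) auto
  qed
  also have "\<dots> = - ?S" by (simp add: sum_negf)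
  finally show ?thesis using s by linarith
qed

lemma sym_half:
  fixes P A :: "nat \<Rightarrow> nat \<Rightarrow> real"
  assumes "\<forall>i<n. \<forall>j<n. P i j = P j i" "\<forall>i<n. \<forall>j<n. A i j + A j i = D j * D i"
  shows "(\<Sum>i\<in>{0..<n}. \<Sum>j\<in>{0..<n}. P i j * A i j) = (1/2) * (\<Sum>i\<in>{0..<n}. \<Sum>j\<in>{0..<n}. P i j * (D j * D i))"
proof -
  let ?S = "(\<Sum>i\<in>{0..<n}. \<Sum>j\<in>{0..<n}. P i j * A i j)"
  have "?S = (\<Sum>j\<in>{0..<n}. \<Sum>i\<in>{0..<n}. P i j * A i j)" by (rule sum.swap)
  also have "\<dots> = (\<Sum>i\<in>{0..<n}. \<Sum>j\<in>{0..<n}. P i j * A j i)"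
    using assms(1) by (intro sum.cong refl) auto
  finally have "2 * ?S = ?S + (\<Sum>i\<in>{0..<n}. \<Sum>j\<in>{0..<n}. P i j * A j i)" by simp
  also have "\<dots> = (\<Sum>i\<in>{0..<n}. \<Sum>j\<in>{0..<n}. P i j * (A i j + A j i))"
    by (simp add: sum.distrib distrib_left)
  also have "\<dots> = (\<Sum>i\<in>{0..<n}. \<Sum>j\<in>{0..<n}. P i j * (D j * D i))"
    using assms(2) by (intro sum.cong refl) auto
  finally show ?thesis by simp
qed

lemma g1: fixes S X :: real shows "(dt / sqrt 2 * S) * (1 / sqrt 2 * X) = dt / 2 * (S * X)"
proof -
  have "sqrt 2 * sqrt 2 = (2::real)" by simp
  then show ?thesis by (simp add: field_simps)
qed

lemma g2: fixes f g :: "nat \<Rightarrow> real" shows "(\<Sum>j\<in>{0..<n}. f j + 2 * g j) = (\<Sum>j\<in>{0..<n}. f j) + 2 * (\<Sum>j\<in>{0..<n}. g j)"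
  by (simp add: sum.distrib sum_distrib_left)

lemma g3: fixes A B :: real shows "dt / 2 * (A + 2 * B) = dt / 2 * A + dt * B"
  by (simp add: algebra_simps)

lemma g4: fixes f g :: "nat \<Rightarrow> real" shows "(\<Sum>i\<in>{0..<n}. dt / 2 * f i + dt * g i) = dt / 2 * (\<Sum>i\<in>{0..<n}. f i) + dt * (\<Sum>i\<in>{0..<n}. g i)"
  by (simp add: sum.distrib sum_distrib_left)

lemma g5: fixes L C A S R :: real shows "L = dt * C + dt * A \<Longrightarrow> R = dt / 2 * S + dt * C \<Longrightarrow> A = 1/2 * S \<Longrightarrow> L = R"
  by simp

lemma fin_alg:
  fixes P A :: "nat \<Rightarrow> nat \<Rightarrow> real" and c D :: "nat \<Rightarrow> real"
  assumes "\<forall>i<n. \<forall>j<n. P i j = P j i" "\<forall>i<n. \<forall>j<n. A i j + A j i = D j * D i"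
  shows "dt * (\<Sum>i\<in>{0..<n}. \<Sum>j\<in>{0..<n}. P i j * (c i * D j + A i j))
       = (\<Sum>i\<in>{0..<n}. (dt / sqrt 2 * (\<Sum>j\<in>{0..<n}. P i j * D j)) * (1 / sqrt 2 * ((c i + D i) + c i)))"
proof (rule g5)
  show "(\<Sum>i\<in>{0..<n}. \<Sum>j\<in>{0..<n}. P i j * A i j) = (1/2) * (\<Sum>i\<in>{0..<n}. \<Sum>j\<in>{0..<n}. P i j * (D j * D i))"
    by (rule sym_half[OF assms])
  show "dt * (\<Sum>i\<in>{0..<n}. \<Sum>j\<in>{0..<n}. P i j * (c i * D j + A i j))
     = dt * (\<Sum>i\<in>{0..<n}. \<Sum>j\<in>{0..<n}. P i j * (c i * D j)) + dt * (\<Sum>i\<in>{0..<n}. \<Sum>j\<in>{0..<n}. P i j * A i j)"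
    by (simp add: distrib_left sum.distrib)
  have "\<And>i. (dt / sqrt 2 * (\<Sum>j\<in>{0..<n}. P i j * D j)) * (1 / sqrt 2 * ((c i + D i) + c i))
        = dt / 2 * (\<Sum>j\<in>{0..<n}. P i j * (D j * D i)) + dt * (\<Sum>j\<in>{0..<n}. P i j * (c i * D j))"
  proof -
    fix i
    have "(dt / sqrt 2 * (\<Sum>j\<in>{0..<n}. P i j * D j)) * (1 / sqrt 2 * ((c i + D i) + c i))
        = dt / 2 * ((\<Sum>j\<in>{0..<n}. P i j * D j) * ((c i + D i) + c i))" by (rule g1)
    also have "(\<Sum>j\<in>{0..<n}. P i j * D j) * ((c i + D i) + c i) = (\<Sum>j\<in>{0..<n}. P i j * D j * ((c i + D i) + c i))"
      by (rule sum_distrib_right)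
    also have "\<dots> = (\<Sum>j\<in>{0..<n}. P i j * (D j * D i) + 2 * (P i j * (c i * D j)))"
      by (intro sum.cong refl) (simp add: algebra_simps)
    also have "\<dots> = (\<Sum>j\<in>{0..<n}. P i j * (D j * D i)) + 2 * (\<Sum>j\<in>{0..<n}. P i j * (c i * D j))"
      by (rule g2)
    also have "dt / 2 * \<dots> = dt / 2 * (\<Sum>j\<in>{0..<n}. P i j * (D j * D i)) + dt * (\<Sum>j\<in>{0..<n}. P i j * (c i * D j))"
      by (rule g3)
    finally show "?thesis i" .
  qed
  then have "(\<Sum>i\<in>{0..<n}. (dt / sqrt 2 * (\<Sum>j\<in>{0..<n}. P i j * D j)) * (1 / sqrt 2 * ((c i + D i) + c i)))
       = (\<Sum>i\<in>{0..<n}. dt / 2 * (\<Sum>j\<in>{0..<n}. P i j * (D j * D i)) + dt * (\<Sum>j\<in>{0..<n}. P i j * (c i * D j)))"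
    by (intro sum.cong refl)
  also have "\<dots> = dt / 2 * (\<Sum>i\<in>{0..<n}. \<Sum>j\<in>{0..<n}. P i j * (D j * D i)) + dt * (\<Sum>i\<in>{0..<n}. \<Sum>j\<in>{0..<n}. P i j * (c i * D j))"
    by (rule g4)
  finally show "(\<Sum>i\<in>{0..<n}. (dt / sqrt 2 * (\<Sum>j\<in>{0..<n}. P i j * D j)) * (1 / sqrt 2 * ((c i + D i) + c i)))
     = dt / 2 * (\<Sum>i\<in>{0..<n}. \<Sum>j\<in>{0..<n}. P i j * (D j * D i)) + dt * (\<Sum>i\<in>{0..<n}. \<Sum>j\<in>{0..<n}. P i j * (c i * D j))" .
qed

lemma set_int_cong_AE:
  fixes f g :: "'a \<Rightarrow> real"
  assumes "set_integrable M A f" "set_integrable M A g" "AE x in M. x \<in> A \<longrightarrow> f x = g x"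
  shows "(LINT x:A|M. f x) = (LINT x:A|M. g x)"
  unfolding set_lebesgue_integral_def
proof (rule integral_cong_AE)
  show "(\<lambda>x. indicator A x *\<^sub>R f x) \<in> borel_measurable M"
    using assms(1) unfolding set_integrable_def by (rule borel_measurable_integrable)
  show "(\<lambda>x. indicator A x *\<^sub>R g x) \<in> borel_measurable M"
    using assms(2) unfolding set_integrable_def by (rule borel_measurable_integrable)
  show "AE x in M. indicator A x *\<^sub>R f x = indicator A x *\<^sub>R g x"
    using assms(3) by eventually_elim (auto simp: indicator_def)
qed

lemma set_int_sum:
  fixes f :: "'i \<Rightarrow> 'a \<Rightarrow> real"
  assumes "finite S" "\<forall>i\<in>S. set_integrable M A (f i)"
  shows "set_integrable M A (\<lambda>x. \<Sum>i\<in>S. f i x)"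
    and "(LINT x:A|M. \<Sum>i\<in>S. f i x) = (\<Sum>i\<in>S. LINT x:A|M. f i x)"
proof -
  have e: "(\<lambda>x. indicator A x *\<^sub>R (\<Sum>i\<in>S. f i x)) = (\<lambda>x. \<Sum>i\<in>S. indicator A x *\<^sub>R f i x)"
    by (simp add: sum_distrib_left)
  show "set_integrable M A (\<lambda>x. \<Sum>i\<in>S. f i x)"
    unfolding set_integrable_def e using assms unfolding set_integrable_def
    by (intro Bochner_Integration.integrable_sum) auto
  show "(LINT x:A|M. \<Sum>i\<in>S. f i x) = (\<Sum>i\<in>S. LINT x:A|M. f i x)"
    unfolding set_lebesgue_integral_def e using assms unfolding set_integrable_def
    by (intro Bochner_Integration.integral_sum) auto
qed

lemma mv_index:
  assumes "A \<in> carrier_mat n n" "v \<in> carrier_vec n" "i < n"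
  shows "mult_mat_vec A v $ i = (\<Sum>j\<in>{0..<n}. A $$ (i,j) * v $ j)"
  using assms by (auto simp: scalar_prod_def intro!: sum.cong)

lemma sum3: fixes f g h :: "'i \<Rightarrow> real"
  shows "(\<Sum>i\<in>S. dt * f i + dt * g i + h i) = dt * sum f S + dt * sum g S + sum h S"
  by (simp add: sum.distrib sum_distrib_left)

theorem lemma2:
  fixes a b dt :: real and n p :: nat and P1 P0 :: "real mat"
    and H :: "'z::{real_inner, complete_space} \<Rightarrow> real \<Rightarrow> real vec"
    and j3 :: "'f::{real_inner, complete_space} \<Rightarrow> 'e::{real_inner, complete_space}"
    and DB :: "(('f \<times> real vec) \<times> ('e \<times> real vec)) set"
  assumes "a < b" and "1 \<le> p" and "p \<le> n"
    and "P1 \<in> carrier_mat n n" and "transpose_mat P1 = P1" and "invertible_mat P1"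
    and "P0 \<in> carrier_mat n n" and "P0 = - transpose_mat P0"
    and "bounded_linear_to_L2 a b n H"
    and "dt > 0"
    and "linear j3" and "bij j3" and "\<forall>x y. inner (j3 x) (j3 y) = inner x y"
    and "dirac_B p j3 DB"
    and "d \<in> compAB a b n p P1 P0 H dt DB"
  shows "pair_dagger a b j3 d d = 0"
proof -
  obtain df dfw df1 e ew e1 fB eB where d: "d = (df, dfw, df1, e, ew, e1, fB, eB)"
    by (metis prod.collapse)
  from assms(15) obtain fp ep where df1: "df1 \<in> carrier_vec (n - p)" and e1: "e1 \<in> carrier_vec (n - p)"
    and fp: "fp \<in> carrier_vec p" and ep: "ep \<in> carrier_vec p"
    and DAm: "(df, dfw, append_vec df1 fp, e, ew, append_vec e1 ep) \<in> DA a b n P1 P0 H dt"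
    and DBm: "((fB, - fp), (eB, ep)) \<in> DB"
    unfolding d compAB_def by auto
  define dfb where "dfb = append_vec df1 fp"
  define eb where "eb = append_vec e1 ep"
  from DAm obtain de where dfL: "L2vec a b n df" and H1: "H1_deriv a b n e de"
    and Leq: "L2eq a b df (\<lambda>x. smult_vec dt (mult_mat_vec P1 (de x) + mult_mat_vec P0 (e x)) + H dfw x)"
    and dfbeq: "dfb = smult_vec (dt / sqrt 2) (mult_mat_vec P1 (e b - e a))"
    and ebeq: "eb = smult_vec (1 / sqrt 2) (e b + e a)"
    and ewc: "\<forall>z. inner z ew = L2inner a b (H z) e"
    unfolding DA_def dfb_def eb_def by (simp only: mem_Collect_eq prod.case) blast

  have "\<forall>d'\<in>DB. pairB j3 ((fB, - fp), (eB, ep)) d' = 0"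
    using DBm assms(14) unfolding dirac_B_def by blast
  then have "pairB j3 ((fB, - fp), (eB, ep)) ((fB, - fp), (eB, ep)) = 0" using DBm by blast
  then have pB: "inner fB (Hilbert_Choice.inv j3 eB) + inner eB (j3 fB) - scalar_prod (- fp) ep - scalar_prod ep (- fp) = 0"
    by (simp only: pairB_def prod.case)
  have j3inv: "j3 (Hilbert_Choice.inv j3 eB) = eB" using assms(12) by (simp add: bij_is_surj surj_f_inv_f)
  have i1: "inner fB (Hilbert_Choice.inv j3 eB) = inner eB (j3 fB)"
  proof -
    have "inner fB (Hilbert_Choice.inv j3 eB) = inner (j3 fB) (j3 (Hilbert_Choice.inv j3 eB))" using assms(13) by simp
    then show ?thesis using j3inv by (simp add: inner_commute)
  qed
  have s1: "scalar_prod (- fp) ep = - scalar_prod fp ep"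
    by (rule scalar_prod_uminus_left) (use fp ep in auto)
  have s2: "scalar_prod ep (- fp) = - scalar_prod fp ep"
  proof -
    have "scalar_prod ep (- fp) = - scalar_prod ep fp"
      by (rule scalar_prod_uminus_right) (use fp ep in auto)
    then show ?thesis using comm_scalar_prod[OF ep fp] by simp
  qed
  have DBfact: "inner eB (j3 fB) = - scalar_prod fp ep" using pB i1 s1 s2 by linarith
  have bnd: "scalar_prod dfb eb = scalar_prod df1 e1 + scalar_prod fp ep"
    unfolding dfb_def eb_def by (rule scalar_prod_append[OF df1 fp e1 ep])

  have ecar: "\<forall>x\<in>{a..b}. e x \<in> carrier_vec n" using H1 unfolding H1_deriv_def by blast
  have deL: "L2vec a b n de" using H1 unfolding H1_deriv_def by blast
  have Eform0: "\<forall>i<n. \<forall>x\<in>{a..b}. e x $ i = e a $ i + (LINT t:{a..x}|lborel. de t $ i)"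
    using H1 unfolding H1_deriv_def by blast
  have hL: "L2vec a b n (H dfw)" using assms(9) unfolding bounded_linear_to_L2_def by blast
  have dcar: "\<forall>x\<in>{a..b}. df x \<in> carrier_vec n" using dfL unfolding L2vec_def by blast
  have decar: "\<forall>x\<in>{a..b}. de x \<in> carrier_vec n" using deL unfolding L2vec_def by blast
  have hcar: "\<forall>x\<in>{a..b}. H dfw x \<in> carrier_vec n" using hL unfolding L2vec_def by blast
  have Fi: "\<forall>i<n. set_integrable lborel {a..b} (\<lambda>x. df x $ i)"
    using dfL sq_int_L1 unfolding L2vec_def by blast
  have DEi: "\<forall>i<n. set_integrable lborel {a..b} (\<lambda>x. de x $ i)"
    using deL sq_int_L1 unfolding L2vec_def by blast
  have Hi: "\<forall>i<n. set_integrable lborel {a..b} (\<lambda>x. H dfw x $ i)"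
    using hL sq_int_L1 unfolding L2vec_def by blast
  have Ec: "\<forall>i<n. continuous_on {a..b} (\<lambda>x. e x $ i)"
  proof (intro allI impI)
    fix i assume i: "i < n"
    show "continuous_on {a..b} (\<lambda>x. e x $ i)"
      by (rule indef_cont[OF DEi[rule_format, OF i]]) (use Eform0 i in blast)
  qed
  have Vc: "\<forall>i<n. continuous_on {a..b} (\<lambda>x. LINT t:{a..x}|lborel. de t $ i)"
  proof (intro allI impI)
    fix i assume i: "i < n"
    show "continuous_on {a..b} (\<lambda>x. LINT t:{a..x}|lborel. de t $ i)"
      by (rule indef_cont[OF DEi[rule_format, OF i], where c=0]) simp
  qed
  have ab: "a \<in> {a..b}" "b \<in> {a..b}" using assms(1) by auto

  define P where "P = (\<lambda>i j. P1 $$ (i,j))"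
  define Q where "Q = (\<lambda>i j. P0 $$ (i,j))"
  have Psym: "\<forall>i<n. \<forall>j<n. P i j = P j i"
  proof (intro allI impI)
    fix i j assume i: "i < n" and j: "j < n"
    have "P1 $$ (i,j) = transpose_mat P1 $$ (i,j)" using assms(5) by simp
    also have "\<dots> = P1 $$ (j,i)" using assms(4) i j by simp
    finally show "P i j = P j i" unfolding P_def .
  qed
  have Qskew: "\<forall>i<n. \<forall>j<n. Q i j = - Q j i"
  proof (intro allI impI)
    fix i j assume i: "i < n" and j: "j < n"
    have "P0 $$ (i,j) = (- transpose_mat P0) $$ (i,j)"
      using assms(8) by (rule arg_cong[where f="\<lambda>M. M $$ (i,j)"])
    also have "\<dots> = - P0 $$ (j,i)" using assms(7) i j by simp
    finally show "Q i j = - Q j i" unfolding Q_def .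
  qed

  define G where "G = (\<lambda>i x. dt * ((\<Sum>j\<in>{0..<n}. P i j * de x $ j) + (\<Sum>j\<in>{0..<n}. Q i j * e x $ j)) + H dfw x $ i)"
  have Gi: "\<forall>i<n. set_integrable lborel {a..b} (G i)"
  proof (intro allI impI)
    fix i assume i: "i < n"
    have 1: "set_integrable lborel {a..b} (\<lambda>x. \<Sum>j\<in>{0..<n}. P i j * de x $ j)"
      by (rule set_int_sum(1)) (use DEi in auto)
    have "continuous_on {a..b} (\<lambda>x. \<Sum>j\<in>{0..<n}. Q i j * e x $ j)"
      by (intro continuous_on_sum continuous_on_mult_left) (use Ec in auto)
    then have 2: "set_integrable lborel {a..b} (\<lambda>x. \<Sum>j\<in>{0..<n}. Q i j * e x $ j)"
      by (rule borel_integrable_atLeastAtMost')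
    have "set_integrable lborel {a..b} (\<lambda>x. dt * ((\<Sum>j\<in>{0..<n}. P i j * de x $ j) + (\<Sum>j\<in>{0..<n}. Q i j * e x $ j)) + H dfw x $ i)"
      using 1 2 Hi i by (intro set_integral_add(1) set_integrable_mult_right) auto
    then show "set_integrable lborel {a..b} (G i)" unfolding G_def .
  qed

  have st1: "L2inner a b df e = (LINT x:{a..b}|lborel. (\<Sum>i\<in>{0..<n}. df x $ i * e x $ i))"
    unfolding L2inner_def
  proof (rule set_lebesgue_integral_cong)
    show "\<forall>x. x \<in> {a..b} \<longrightarrow> scalar_prod (df x) (e x) = (\<Sum>i\<in>{0..<n}. df x $ i * e x $ i)"
    proof (intro allI impI)
      fix x assume "x \<in> {a..b}"
      then have "dim_vec (e x) = n" using ecar by auto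
      then show "scalar_prod (df x) (e x) = (\<Sum>i\<in>{0..<n}. df x $ i * e x $ i)"
        by (simp add: scalar_prod_def)
    qed
  qed simp
  have st5: "L2inner a b (H dfw) e = (LINT x:{a..b}|lborel. (\<Sum>i\<in>{0..<n}. H dfw x $ i * e x $ i))"
    unfolding L2inner_def
  proof (rule set_lebesgue_integral_cong)
    show "\<forall>x. x \<in> {a..b} \<longrightarrow> scalar_prod (H dfw x) (e x) = (\<Sum>i\<in>{0..<n}. H dfw x $ i * e x $ i)"
    proof (intro allI impI)
      fix x assume "x \<in> {a..b}"
      then have "dim_vec (e x) = n" using ecar by auto
      then show "scalar_prod (H dfw x) (e x) = (\<Sum>i\<in>{0..<n}. H dfw x $ i * e x $ i)"
        by (simp add: scalar_prod_def)
    qed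
  qed simp

  have pw: "df x $ i = G i x" if x: "x \<in> {a..b}" and i: "i < n"
    and eq: "df x = smult_vec dt (mult_mat_vec P1 (de x) + mult_mat_vec P0 (e x)) + H dfw x" for x i
  proof -
    have dims: "dim_vec (H dfw x) = n" "dim_vec (de x) = n" "dim_vec (e x) = n"
      using hcar decar ecar x by auto
    have "df x $ i = dt * (mult_mat_vec P1 (de x) $ i + mult_mat_vec P0 (e x) $ i) + H dfw x $ i"
      unfolding eq using dims i assms(4,7) by simp
    also have "\<dots> = G i x"
      unfolding G_def P_def Q_def
      using mv_index[OF assms(4), of "de x" i] mv_index[OF assms(7), of "e x" i] decar ecar x i by simp
    finally show ?thesis .
  qed

  have st2: "(LINT x:{a..b}|lborel. (\<Sum>i\<in>{0..<n}. df x $ i * e x $ i))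
      = (LINT x:{a..b}|lborel. (\<Sum>i\<in>{0..<n}. G i x * e x $ i))"
  proof (rule set_int_cong_AE)
    show "set_integrable lborel {a..b} (\<lambda>x. \<Sum>i\<in>{0..<n}. df x $ i * e x $ i)"
      by (rule set_int_sum(1)) (use Fi Ec integrable_times_cont in auto)
    show "set_integrable lborel {a..b} (\<lambda>x. \<Sum>i\<in>{0..<n}. G i x * e x $ i)"
      by (rule set_int_sum(1)) (use Gi Ec integrable_times_cont in auto)
    show "AE x in lborel. x \<in> {a..b} \<longrightarrow> (\<Sum>i\<in>{0..<n}. df x $ i * e x $ i) = (\<Sum>i\<in>{0..<n}. G i x * e x $ i)"
      using Leq unfolding L2eq_def
    proof (rule AE_mp, intro AE_I2 impI)
      fix x assume eq: "x \<in> {a..b} \<longrightarrow> df x = smult_vec dt (mult_mat_vec P1 (de x) + mult_mat_vec P0 (e x)) + H dfw x"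
        and x: "x \<in> {a..b}"
      from eq x have eq': "df x = smult_vec dt (mult_mat_vec P1 (de x) + mult_mat_vec P0 (e x)) + H dfw x" by blast
      show "(\<Sum>i\<in>{0..<n}. df x $ i * e x $ i) = (\<Sum>i\<in>{0..<n}. G i x * e x $ i)"
        by (intro sum.cong refl) (simp add: pw[OF x _ eq'])
    qed
  qed

  have st3: "(\<Sum>i\<in>{0..<n}. G i x * e x $ i)
      = dt * (\<Sum>i\<in>{0..<n}. \<Sum>j\<in>{0..<n}. P i j * (de x $ j * e x $ i)) + (\<Sum>i\<in>{0..<n}. H dfw x $ i * e x $ i)" for x
  proof -
    have "(\<Sum>i\<in>{0..<n}. G i x * e x $ i) = (\<Sum>i\<in>{0..<n}. dt * ((\<Sum>j\<in>{0..<n}. P i j * de x $ j) * e x $ i)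
        + dt * ((\<Sum>j\<in>{0..<n}. Q i j * e x $ j) * e x $ i) + H dfw x $ i * e x $ i)"
      unfolding G_def by (intro sum.cong refl) (simp add: algebra_simps)
    also have "\<dots> = dt * (\<Sum>i\<in>{0..<n}. (\<Sum>j\<in>{0..<n}. P i j * de x $ j) * e x $ i)
        + dt * (\<Sum>i\<in>{0..<n}. (\<Sum>j\<in>{0..<n}. Q i j * e x $ j) * e x $ i) + (\<Sum>i\<in>{0..<n}. H dfw x $ i * e x $ i)"
      by (rule sum3)
    also have "(\<Sum>i\<in>{0..<n}. (\<Sum>j\<in>{0..<n}. Q i j * e x $ j) * e x $ i) = 0"
      by (rule skew_zero[OF Qskew])
    also have "(\<Sum>i\<in>{0..<n}. (\<Sum>j\<in>{0..<n}. P i j * de x $ j) * e x $ i)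
        = (\<Sum>i\<in>{0..<n}. \<Sum>j\<in>{0..<n}. P i j * (de x $ j * e x $ i))"
      by (simp add: sum_distrib_right mult.assoc)
    finally show ?thesis by simp
  qed

  define A where "A = (\<lambda>i j. LINT x:{a..b}|lborel. de x $ j * (LINT t:{a..x}|lborel. de t $ i))"
  define D where "D = (\<lambda>j. e b $ j - e a $ j)"
  define c where "c = (\<lambda>i. e a $ i)"

  have DEEi: "set_integrable lborel {a..b} (\<lambda>x. de x $ j * e x $ i)" if "i < n" "j < n" for i j
    using integrable_times_cont DEi Ec that by blast
  have Dint: "(LINT x:{a..b}|lborel. de x $ j) = D j" if "j < n" for j
  proof -
    have "e b $ j = e a $ j + (LINT t:{a..b}|lborel. de t $ j)" using Eform0 that ab(2) by blast
    then show ?thesis unfolding D_def by linarith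
  qed
  have st6: "(LINT x:{a..b}|lborel. de x $ j * e x $ i) = c i * D j + A i j" if i: "i < n" and j: "j < n" for i j
  proof -
    have "(LINT x:{a..b}|lborel. de x $ j * e x $ i)
        = (LINT x:{a..b}|lborel. c i * de x $ j + de x $ j * (LINT t:{a..x}|lborel. de t $ i))"
    proof (rule set_lebesgue_integral_cong)
      show "\<forall>x. x \<in> {a..b} \<longrightarrow> de x $ j * e x $ i = c i * de x $ j + de x $ j * (LINT t:{a..x}|lborel. de t $ i)"
      proof (intro allI impI)
        fix x assume x: "x \<in> {a..b}"
        have "e x $ i = c i + (LINT t:{a..x}|lborel. de t $ i)" using Eform0 i x unfolding c_def by blast
        then show "de x $ j * e x $ i = c i * de x $ j + de x $ j * (LINT t:{a..x}|lborel. de t $ i)"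
          by (simp add: algebra_simps)
      qed
    qed simp
    also have "\<dots> = c i * (LINT x:{a..b}|lborel. de x $ j) + A i j"
    proof -
      have 1: "set_integrable lborel {a..b} (\<lambda>x. c i * de x $ j)"
        using DEi j by auto
      have 2: "set_integrable lborel {a..b} (\<lambda>x. de x $ j * (LINT t:{a..x}|lborel. de t $ i))"
        using integrable_times_cont DEi Vc i j by blast
      show ?thesis using set_integral_add(2)[OF 1 2] DEi j unfolding A_def by simp
    qed
    finally show ?thesis using Dint j by simp
  qed
  have st7: "A i j + A j i = D j * D i" if i: "i < n" and j: "j < n" for i j
    using ibp[OF DEi[rule_format, OF j] DEi[rule_format, OF i]] Dint i j unfolding A_def by simp

  have st4: "(LINT x:{a..b}|lborel. dt * (\<Sum>i\<in>{0..<n}. \<Sum>j\<in>{0..<n}. P i j * (de x $ j * e x $ i)) + (\<Sum>i\<in>{0..<n}. H dfw x $ i * e x $ i))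
     = dt * (\<Sum>i\<in>{0..<n}. \<Sum>j\<in>{0..<n}. P i j * (c i * D j + A i j)) + (LINT x:{a..b}|lborel. (\<Sum>i\<in>{0..<n}. H dfw x $ i * e x $ i))"
  proof -
    have inner: "\<forall>i\<in>{0..<n}. set_integrable lborel {a..b} (\<lambda>x. \<Sum>j\<in>{0..<n}. P i j * (de x $ j * e x $ i))"
      using DEEi by (auto intro!: set_int_sum(1))
    have 1: "set_integrable lborel {a..b} (\<lambda>x. dt * (\<Sum>i\<in>{0..<n}. \<Sum>j\<in>{0..<n}. P i j * (de x $ j * e x $ i)))"
      using inner by (intro set_integrable_mult_right set_int_sum(1)) auto
    have 2: "set_integrable lborel {a..b} (\<lambda>x. \<Sum>i\<in>{0..<n}. H dfw x $ i * e x $ i)"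
      by (rule set_int_sum(1)) (use Hi Ec integrable_times_cont in auto)
    have "(LINT x:{a..b}|lborel. (\<Sum>i\<in>{0..<n}. \<Sum>j\<in>{0..<n}. P i j * (de x $ j * e x $ i)))
        = (\<Sum>i\<in>{0..<n}. LINT x:{a..b}|lborel. (\<Sum>j\<in>{0..<n}. P i j * (de x $ j * e x $ i)))"
      using inner by (intro set_int_sum(2)) auto
    also have "\<dots> = (\<Sum>i\<in>{0..<n}. \<Sum>j\<in>{0..<n}. P i j * (c i * D j + A i j))"
    proof (intro sum.cong refl)
      fix i assume i: "i \<in> {0..<n}"
      have "(LINT x:{a..b}|lborel. (\<Sum>j\<in>{0..<n}. P i j * (de x $ j * e x $ i)))
          = (\<Sum>j\<in>{0..<n}. LINT x:{a..b}|lborel. P i j * (de x $ j * e x $ i))"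
        using DEEi i by (intro set_int_sum(2)) auto
      also have "\<dots> = (\<Sum>j\<in>{0..<n}. P i j * (c i * D j + A i j))"
        using st6 i by (intro sum.cong refl) auto
      finally show "(LINT x:{a..b}|lborel. (\<Sum>j\<in>{0..<n}. P i j * (de x $ j * e x $ i)))
          = (\<Sum>j\<in>{0..<n}. P i j * (c i * D j + A i j))" .
    qed
    finally have 3: "(LINT x:{a..b}|lborel. (\<Sum>i\<in>{0..<n}. \<Sum>j\<in>{0..<n}. P i j * (de x $ j * e x $ i)))
        = (\<Sum>i\<in>{0..<n}. \<Sum>j\<in>{0..<n}. P i j * (c i * D j + A i j))" .
    show ?thesis using set_integral_add(2)[OF 1 2] 3 by simp
  qed

  have st8: "scalar_prod dfb eb = (\<Sum>i\<in>{0..<n}. (dt / sqrt 2 * (\<Sum>j\<in>{0..<n}. P i j * D j)) * (1 / sqrt 2 * ((c i + D i) + c i)))"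
  proof -
    have ea: "e a \<in> carrier_vec n" and eb': "e b \<in> carrier_vec n" using ecar ab by auto
    have dimeb: "dim_vec eb = n" using ebeq ea eb' by simp
    have dmin: "e b - e a \<in> carrier_vec n" using ea eb' by simp
    show ?thesis
      unfolding scalar_prod_def dimeb
    proof (intro sum.cong refl)
      fix i assume i: "i \<in> {0..<n}"
      have "dfb $ i = dt / sqrt 2 * (\<Sum>j\<in>{0..<n}. P i j * D j)"
        unfolding dfbeq P_def D_def using mv_index[OF assms(4) dmin, of i] i assms(4) ea eb' by simp
      moreover have "eb $ i = 1 / sqrt 2 * ((c i + D i) + c i)"
        unfolding ebeq c_def D_def using i ea eb' by simp
      ultimately show "dfb $ i * eb $ i = (dt / sqrt 2 * (\<Sum>j\<in>{0..<n}. P i j * D j)) * (1 / sqrt 2 * ((c i + D i) + c i))"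
        by simp
    qed
  qed

  have main: "L2inner a b df e = L2inner a b (H dfw) e + scalar_prod dfb eb"
  proof -
    have "L2inner a b df e = (LINT x:{a..b}|lborel. (\<Sum>i\<in>{0..<n}. G i x * e x $ i))"
      using st1 st2 by simp
    also have "\<dots> = (LINT x:{a..b}|lborel. dt * (\<Sum>i\<in>{0..<n}. \<Sum>j\<in>{0..<n}. P i j * (de x $ j * e x $ i)) + (\<Sum>i\<in>{0..<n}. H dfw x $ i * e x $ i))"
      by (simp only: st3)
    also have "\<dots> = dt * (\<Sum>i\<in>{0..<n}. \<Sum>j\<in>{0..<n}. P i j * (c i * D j + A i j)) + L2inner a b (H dfw) e"
      using st4 st5 by simp
    also have "dt * (\<Sum>i\<in>{0..<n}. \<Sum>j\<in>{0..<n}. P i j * (c i * D j + A i j)) = scalar_prod dfb eb"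
      unfolding st8 by (rule fin_alg[OF Psym]) (use st7 in auto)
    finally show ?thesis by simp
  qed

  have sym1: "L2inner a b e df = L2inner a b df e"
    unfolding L2inner_def
  proof (rule set_lebesgue_integral_cong)
    show "\<forall>x. x \<in> {a..b} \<longrightarrow> scalar_prod (e x) (df x) = scalar_prod (df x) (e x)"
      using ecar dcar comm_scalar_prod by blast
  qed simp
  have ewdfw: "inner dfw ew = L2inner a b (H dfw) e" using ewc by blast
  have c1: "scalar_prod e1 df1 = scalar_prod df1 e1" by (rule comm_scalar_prod[OF e1 df1])
  have c2: "inner ew dfw = inner dfw ew" by (rule inner_commute)
  have "pair_dagger a b j3 d d = L2inner a b df e - inner dfw ew - scalar_prod df1 e1 + inner fB (Hilbert_Choice.inv j3 eB)
     + L2inner a b e df - inner ew dfw - scalar_prod e1 df1 + inner eB (j3 fB)"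
    unfolding d pair_dagger_def by (simp only: prod.case)
  then show ?thesis using sym1 ewdfw c1 c2 main bnd DBfact i1 by linarith
qed

end
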